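(* For every $k\in\mathbb Z$, $\mathcal A=\mathbb Z[\mathbb P][x_{k-1},x_k,x_{k+1},x_{k+2}]$.
   Context: Fix positive integers $\ell_1,\ell_2$ and independent variables $p_{i,k}$ ($i=1,2$, $1\le k\le\ell_i$), $p_{i,0}=1$. Let $\mathbb P$ be the group of Laurent monomials in the $p_{i,k}$ and $\mathbb Z[\mathbb P]$ its group ring; let $\mathcal F=\mathbb Q(p_{i,k})(x_1,x_2)$ with $x_1,x_2$ independent. Put $P_1(z)=1+\sum_{k=1}^{\ell_1}p_{1,k}z^k$, $P_2(z)=1+\sum_{k=1}^{\ell_2}p_{2,k}z^k$ and $\overline P_i(z)=z^{\ell_i}P_i(z^{-1})/p_{i,\ell_i}$. Define $x_k\in\mathcal F$ for all $k\in\mathbb Z$ from $x_1,x_2$ by $x_{k+1}x_{k-1}=P_1(x_k)$ if $k\equiv1$, $P_2(x_k)$ if $k\equiv2$, $\overline P_1(x_k)$ if $k\equiv3$, $\overline P_2(x_k)$ if $k\equiv0\pmod4$. Let $\mathcal A$ be the $\mathbb Z[\mathbb P]$-subalgebra of $\mathcal F$ generated by all $x_k$. *)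

theory Defs
  imports Complex_Main "HOL-Library.Poly_Mapping"
begin

(* Variables: PV i k stands for p_{i,k}; XV j stands for x_j. *)
datatype var = PV nat nat | XV nat

definition mpoly_eval :: "(('v \<Rightarrow>\<^sub>0 nat) \<Rightarrow>\<^sub>0 rat) \<Rightarrow> ('v \<Rightarrow> 'a::field_char_0) \<Rightarrow> 'a" where
  "mpoly_eval q v = (\<Sum>mon\<in>Poly_Mapping.keys q. of_rat (Poly_Mapping.lookup q mon) * (\<Prod>i\<in>Poly_Mapping.keys mon. v i ^ Poly_Mapping.lookup mon i))"

definition alg_indep_on :: "('v \<Rightarrow> 'a::field_char_0) \<Rightarrow> 'v set \<Rightarrow> bool" where
  "alg_indep_on v V \<longleftrightarrow>
     (\<forall>q. (\<forall>m\<in>Poly_Mapping.keys q. Poly_Mapping.keys m \<subseteq> V) \<longrightarrow> mpoly_eval q v = 0 \<longrightarrow> q = 0)"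

definition par_idx :: "nat \<Rightarrow> nat \<Rightarrow> (nat \<times> nat) set" where
  "par_idx l1 l2 = {(i,k). (i = 1 \<and> 1 \<le> k \<and> k \<le> l1) \<or> (i = 2 \<and> 1 \<le> k \<and> k \<le> l2)}"

definition laurent_monomials :: "nat \<Rightarrow> nat \<Rightarrow> (nat \<Rightarrow> nat \<Rightarrow> 'a::field) \<Rightarrow> 'a set" where
  "laurent_monomials l1 l2 p =
     {\<Prod>(i,k)\<in>par_idx l1 l2. p i k powi e (i,k) | e. True}"

inductive_set ring_gen :: "'a::comm_ring_1 set \<Rightarrow> 'a set" for S where
  base: "a \<in> S \<Longrightarrow> a \<in> ring_gen S"
| one: "1 \<in> ring_gen S"
| diff: "a \<in> ring_gen S \<Longrightarrow> b \<in> ring_gen S \<Longrightarrow> a - b \<in> ring_gen S"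
| mult: "a \<in> ring_gen S \<Longrightarrow> b \<in> ring_gen S \<Longrightarrow> a * b \<in> ring_gen S"

(* the Z[P]-subalgebra of the field generated by a set T: the subring generated by
   the image of Z[P] (i.e. by the Laurent monomials) together with T *)
definition ZP_alg :: "nat \<Rightarrow> nat \<Rightarrow> (nat \<Rightarrow> nat \<Rightarrow> 'a::field) \<Rightarrow> 'a set \<Rightarrow> 'a set" where
  "ZP_alg l1 l2 p T = ring_gen (laurent_monomials l1 l2 p \<union> T)"

definition Pexch :: "nat \<Rightarrow> (nat \<Rightarrow> 'a::field) \<Rightarrow> 'a \<Rightarrow> 'a" where
  "Pexch l q z = 1 + (\<Sum>k=1..l. q k * z ^ k)"

(* Pbar_i(z) = z^{l_i} P_i(z^{-1}) / p_{i,l_i}, written out (with p_{i,0} = 1) *)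
definition Pbar :: "nat \<Rightarrow> (nat \<Rightarrow> 'a::field) \<Rightarrow> 'a \<Rightarrow> 'a" where
  "Pbar l q z = (\<Sum>k=0..l. (if k = 0 then 1 else q k) * z ^ (l - k)) / q l"

(* exchange polynomial used in x_{k+1} x_{k-1} = E_k(x_k) *)
definition exch :: "nat \<Rightarrow> nat \<Rightarrow> (nat \<Rightarrow> nat \<Rightarrow> 'a::field) \<Rightarrow> int \<Rightarrow> 'a \<Rightarrow> 'a" where
  "exch l1 l2 p k z =
     (if k mod 4 = 1 then Pexch l1 (p 1) z
      else if k mod 4 = 2 then Pexch l2 (p 2) z
      else if k mod 4 = 3 then Pbar l1 (p 1) z
      else Pbar l2 (p 2) z)"

(* forward: fwd n = (x_{n+1}, x_{n+2}) *)
fun fwd :: "nat \<Rightarrow> nat \<Rightarrow> (nat \<Rightarrow> nat \<Rightarrow> 'a::field) \<Rightarrow> 'a \<Rightarrow> 'a \<Rightarrow> nat \<Rightarrow> 'a \<times> 'a" where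
  "fwd l1 l2 p a b 0 = (a, b)"
| "fwd l1 l2 p a b (Suc n) =
     (let (u, w) = fwd l1 l2 p a b n in (w, exch l1 l2 p (int n + 2) w / u))"

(* backward: bwd n = (x_{2-n}, x_{1-n}) *)
fun bwd :: "nat \<Rightarrow> nat \<Rightarrow> (nat \<Rightarrow> nat \<Rightarrow> 'a::field) \<Rightarrow> 'a \<Rightarrow> 'a \<Rightarrow> nat \<Rightarrow> 'a \<times> 'a" where
  "bwd l1 l2 p a b 0 = (b, a)"
| "bwd l1 l2 p a b (Suc n) =
     (let (u, w) = bwd l1 l2 p a b n in (w, exch l1 l2 p (1 - int n) w / u))"

definition xseq :: "nat \<Rightarrow> nat \<Rightarrow> (nat \<Rightarrow> nat \<Rightarrow> 'a::field) \<Rightarrow> 'a \<Rightarrow> 'a \<Rightarrow> int \<Rightarrow> 'a" where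
  "xseq l1 l2 p a b k =
     (if k \<ge> 1 then fst (fwd l1 l2 p a b (nat (k - 1)))
      else snd (bwd l1 l2 p a b (nat (1 - k))))"

definition gen_vars :: "nat \<Rightarrow> nat \<Rightarrow> var set" where
  "gen_vars l1 l2 = {PV i k | i k. (i,k) \<in> par_idx l1 l2} \<union> {XV 1, XV 2}"

definition var_val :: "(nat \<Rightarrow> nat \<Rightarrow> 'a) \<Rightarrow> 'a \<Rightarrow> 'a \<Rightarrow> var \<Rightarrow> 'a" where
  "var_val p a b v = (case v of PV i k \<Rightarrow> p i k | XV j \<Rightarrow> (if j = 1 then a else b))"

end

theory Submission imports Defs begin

definition monv :: "('v \<Rightarrow>\<^sub>0 nat) \<Rightarrow> ('v \<Rightarrow> 'a::field_char_0) \<Rightarrow> 'a" where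
  "monv m v = (\<Prod>i\<in>Poly_Mapping.keys m. v i ^ Poly_Mapping.lookup m i)"

lemma monv_superset:
  assumes "finite S" "Poly_Mapping.keys m \<subseteq> S"
  shows "monv m v = (\<Prod>i\<in>S. v i ^ Poly_Mapping.lookup m i)"
  unfolding monv_def
  by (rule prod.mono_neutral_left) (use assms in \<open>auto simp: in_keys_iff\<close>)

lemma monv_add: "monv (m1 + m2) v = monv m1 v * monv m2 v"
proof -
  let ?S = "Poly_Mapping.keys m1 \<union> Poly_Mapping.keys m2"
  have f: "finite ?S" by simp
  have "monv (m1 + m2) v = (\<Prod>i\<in>?S. v i ^ Poly_Mapping.lookup (m1+m2) i)"
    by (rule monv_superset[OF f keys_add])
  also have "\<dots> = (\<Prod>i\<in>?S. v i ^ Poly_Mapping.lookup m1 i) * (\<Prod>i\<in>?S. v i ^ Poly_Mapping.lookup m2 i)"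
    by (simp add: lookup_add power_add prod.distrib)
  also have "\<dots> = monv m1 v * monv m2 v"
    using monv_superset[OF f, of m1 v] monv_superset[OF f, of m2 v] by auto
  finally show ?thesis .
qed

lemma eval_monv: "mpoly_eval q v = (\<Sum>m\<in>Poly_Mapping.keys q. of_rat (Poly_Mapping.lookup q m) * monv m v)"
  unfolding mpoly_eval_def monv_def ..

lemma eval_superset:
  assumes "finite S" "Poly_Mapping.keys q \<subseteq> S"
  shows "mpoly_eval q v = (\<Sum>m\<in>S. of_rat (Poly_Mapping.lookup q m) * monv m v)"
  unfolding eval_monv
  by (rule sum.mono_neutral_left) (use assms in \<open>auto simp: in_keys_iff\<close>)

lemma eval_add: "mpoly_eval (q1 + q2) v = mpoly_eval q1 v + mpoly_eval q2 v"
proof -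
  let ?S = "Poly_Mapping.keys q1 \<union> Poly_Mapping.keys q2"
  have f: "finite ?S" by simp
  show ?thesis
    using eval_superset[OF f keys_add[of q1 q2], of v] eval_superset[OF f, of q1 v] eval_superset[OF f, of q2 v]
    by (simp add: lookup_add of_rat_add distrib_right sum.distrib)
qed

lemma eval_zero: "mpoly_eval 0 v = 0"
  by (simp add: mpoly_eval_def)

lemma eval_sum: "finite I \<Longrightarrow> mpoly_eval (sum f I) v = (\<Sum>i\<in>I. mpoly_eval (f i) v)"
  by (induct I rule: finite_induct) (auto simp: eval_zero eval_add)

lemma eval_single: "mpoly_eval (Poly_Mapping.single m c) v = of_rat c * monv m v"
  by (simp add: eval_monv)

lemma expand: "q = (\<Sum>m\<in>Poly_Mapping.keys q. Poly_Mapping.single m (Poly_Mapping.lookup q m))"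
  by (rule poly_mapping_eqI) (auto simp: lookup_sum lookup_single when_def in_keys_iff)

lemma eval_mult: "mpoly_eval (q1 * q2) v = mpoly_eval q1 v * mpoly_eval q2 v"
proof -
  let ?K1 = "Poly_Mapping.keys q1" and ?K2 = "Poly_Mapping.keys q2"
  have "q1 * q2 = (\<Sum>m\<in>?K1. Poly_Mapping.single m (Poly_Mapping.lookup q1 m)) * (\<Sum>n\<in>?K2. Poly_Mapping.single n (Poly_Mapping.lookup q2 n))"
    using expand[of q1] expand[of q2] by simp
  also have "\<dots> = (\<Sum>m\<in>?K1. \<Sum>n\<in>?K2. Poly_Mapping.single (m + n) (Poly_Mapping.lookup q1 m * Poly_Mapping.lookup q2 n))"
    by (simp add: sum_product mult_single)
  finally have "mpoly_eval (q1 * q2) v = (\<Sum>m\<in>?K1. \<Sum>n\<in>?K2. (of_rat (Poly_Mapping.lookup q1 m) * monv m v) * (of_rat (Poly_Mapping.lookup q2 n) * monv n v))"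
    by (simp add: eval_sum eval_single monv_add of_rat_mult mult_ac)
  also have "\<dots> = mpoly_eval q1 v * mpoly_eval q2 v"
    by (simp add: eval_monv sum_product)
  finally show ?thesis .
qed

definition vars_in :: "'v set \<Rightarrow> (('v \<Rightarrow>\<^sub>0 nat) \<Rightarrow>\<^sub>0 rat) \<Rightarrow> bool" where
  "vars_in V q \<longleftrightarrow> (\<forall>m\<in>Poly_Mapping.keys q. Poly_Mapping.keys m \<subseteq> V)"

lemma vars_add: "vars_in V q1 \<Longrightarrow> vars_in V q2 \<Longrightarrow> vars_in V (q1 + q2)"
  unfolding vars_in_def using keys_add[of q1 q2] by (meson Un_iff subsetD)

lemma vars_mult: "vars_in V q1 \<Longrightarrow> vars_in V q2 \<Longrightarrow> vars_in V (q1 * q2)"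
proof -
  assume a: "vars_in V q1" "vars_in V q2"
  show ?thesis unfolding vars_in_def
  proof
    fix m assume "m \<in> Poly_Mapping.keys (q1 * q2)"
    then obtain a b where ab: "m = a + b" "a \<in> Poly_Mapping.keys q1" "b \<in> Poly_Mapping.keys q2"
      using keys_mult[of q1 q2] by blast
    have "Poly_Mapping.keys m \<subseteq> Poly_Mapping.keys a \<union> Poly_Mapping.keys b"
      unfolding ab(1) by (rule keys_add)
    with a ab show "Poly_Mapping.keys m \<subseteq> V" unfolding vars_in_def by blast
  qed
qed

definition Pos :: "'v set \<Rightarrow> (('v \<Rightarrow>\<^sub>0 nat) \<Rightarrow>\<^sub>0 rat) \<Rightarrow> bool" where
  "Pos V q \<longleftrightarrow> vars_in V q \<and> 0 < (mpoly_eval q (\<lambda>_. 1::real))"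

lemma Pos_add: "Pos V q1 \<Longrightarrow> Pos V q2 \<Longrightarrow> Pos V (q1 + q2)"
  unfolding Pos_def by (simp add: vars_add eval_add)

lemma Pos_mult: "Pos V q1 \<Longrightarrow> Pos V q2 \<Longrightarrow> Pos V (q1 * q2)"
  unfolding Pos_def by (simp add: vars_mult eval_mult)

lemma Pos_one: "Pos V 1"
  unfolding Pos_def vars_in_def by (simp add: eval_monv monv_def)

definition Var :: "'v \<Rightarrow> (('v \<Rightarrow>\<^sub>0 nat) \<Rightarrow>\<^sub>0 rat)" where
  "Var x = Poly_Mapping.single (Poly_Mapping.single x 1) 1"

lemma eval_one: "mpoly_eval 1 v = 1"
  by (simp add: eval_monv monv_def)

lemma eval_Var: "mpoly_eval (Var x) v = v x"
  by (simp add: Var_def eval_monv monv_def)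

lemma Pos_Var: "x \<in> V \<Longrightarrow> Pos V (Var x)"
  unfolding Pos_def vars_in_def by (simp add: eval_Var) (simp add: Var_def)

lemma Pos_nz: "Pos V q \<Longrightarrow> q \<noteq> 0"
  unfolding Pos_def by (auto simp: eval_zero)




lemma rg_zero: "0 \<in> ring_gen S"
  using ring_gen.diff[OF ring_gen.one ring_gen.one] by simp

lemma rg_neg: "a \<in> ring_gen S \<Longrightarrow> - a \<in> ring_gen S"
  using ring_gen.diff[OF rg_zero] by fastforce

lemma rg_add: "a \<in> ring_gen S \<Longrightarrow> b \<in> ring_gen S \<Longrightarrow> a + b \<in> ring_gen S"
  using ring_gen.diff[OF _ rg_neg, of a S b] by simp

lemma rg_sum: "finite I \<Longrightarrow> (\<forall>i\<in>I. f i \<in> ring_gen S) \<Longrightarrow> sum f I \<in> ring_gen S"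
  by (induct I rule: finite_induct) (auto intro: rg_zero rg_add)

lemma rg_pow: "a \<in> ring_gen S \<Longrightarrow> a ^ n \<in> ring_gen S"
  by (induct n) (auto intro: ring_gen.one ring_gen.mult)

lemma rg_subset: "T \<subseteq> ring_gen S \<Longrightarrow> ring_gen T \<subseteq> ring_gen S"
proof
  fix x assume T: "T \<subseteq> ring_gen S" and "x \<in> ring_gen T"
  from \<open>x \<in> ring_gen T\<close> show "x \<in> ring_gen S"
    by (induct rule: ring_gen.induct) (use T in \<open>auto intro: ring_gen.intros\<close>)
qed

lemma rg_mono: "T \<subseteq> S \<Longrightarrow> ring_gen T \<subseteq> ring_gen S"
  by (rule rg_subset) (auto intro: ring_gen.base)

lemma core_eq:
  fixes a b y z w u T :: "'a::field"
  assumes y: "y \<noteq> 0" and ra: "y * a = (\<Sum>j=0..d. f j * b ^ j)" and rz: "b * z = 1 + y * T"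
    and rw: "y * w = (\<Sum>j=0..d. h j * z ^ j)" and rev: "\<forall>j\<le>d. h (d - j) = u * f j"
  shows "w = u * z ^ d * a - T * (\<Sum>j=0..d. h (d - j) * z ^ (d - j) * (\<Sum>i<j. (b * z) ^ i))"
proof -
  have 1: "u * z ^ d * (y * a) = (\<Sum>j=0..d. h (d - j) * z ^ (d - j) * (b * z) ^ j)"
    unfolding ra sum_distrib_left
  proof (rule sum.cong[OF refl])
    fix j assume "j \<in> {0..d}"
    then have j: "j \<le> d" by simp
    then have zd: "z ^ d = z ^ (d - j) * z ^ j" by (simp flip: power_add)
    show "u * z ^ d * (f j * b ^ j) = h (d - j) * z ^ (d - j) * (b * z) ^ j"
      using rev j unfolding zd by (simp add: power_mult_distrib mult_ac)
  qed
  have 2: "(\<Sum>j=0..d. h j * z ^ j) = (\<Sum>j=0..d. h (d - j) * z ^ (d - j))"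
    using sum.atLeastAtMost_rev[of "\<lambda>j. h j * z ^ j" 0 d] by simp
  have 3: "(y * T) * (\<Sum>i<j. (b * z) ^ i) = (b * z) ^ j - 1" for j
  proof -
    have "y * T = b * z - 1" using rz by simp
    then show ?thesis using power_diff_1_eq[of "b * z" j] by simp
  qed
  have "y * (u * z ^ d * a - T * (\<Sum>j=0..d. h (d - j) * z ^ (d - j) * (\<Sum>i<j. (b * z) ^ i)))
     = u * z ^ d * (y * a) - (\<Sum>j=0..d. h (d - j) * z ^ (d - j) * ((y * T) * (\<Sum>i<j. (b * z) ^ i)))"
    by (simp add: sum_distrib_left algebra_simps)
  also have "\<dots> = (\<Sum>j=0..d. h (d - j) * z ^ (d - j) * (b * z) ^ j)
        - (\<Sum>j=0..d. h (d - j) * z ^ (d - j) * ((b * z) ^ j - 1))"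
    unfolding 1 3 ..
  also have "\<dots> = (\<Sum>j=0..d. h (d - j) * z ^ (d - j))"
    by (simp add: sum_subtractf[symmetric] algebra_simps)
  also have "\<dots> = y * w" using rw 2 by simp
  finally show ?thesis using y by simp
qed

lemma core_mem:
  fixes a b y z w u T :: "'a::field"
  assumes y: "y \<noteq> 0" and ra: "y * a = (\<Sum>j=0..d. f j * b ^ j)" and rz: "b * z = 1 + y * T"
    and rw: "y * w = (\<Sum>j=0..d. h j * z ^ j)" and rev: "\<forall>j\<le>d. h (d - j) = u * f j"
    and m: "a \<in> ring_gen S" "b \<in> ring_gen S" "z \<in> ring_gen S" "u \<in> ring_gen S" "T \<in> ring_gen S"
      "\<forall>j\<le>d. h j \<in> ring_gen S"
  shows "w \<in> ring_gen S"
  unfolding core_eq[OF y ra rz rw rev] using m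
  by (intro ring_gen.diff ring_gen.mult rg_pow rg_sum) (auto intro!: ring_gen.mult rg_pow rg_sum)

lemma Pexch_sum: "q 0 = 1 \<Longrightarrow> Pexch l q t = (\<Sum>j=0..l. q j * t ^ j)"
  unfolding Pexch_def by (simp add: sum.atLeast_Suc_atMost)

lemma Pbar_sum: "q 0 = 1 \<Longrightarrow> Pbar l q t = (\<Sum>j=0..l. (q (l - j) / q l) * t ^ j)"
proof -
  assume q0: "q 0 = 1"
  have "Pbar l q t = (\<Sum>k=0..l. q k * t ^ (l - k)) / q l"
    unfolding Pbar_def by (rule arg_cong[where f="\<lambda>s. s / q l"], rule sum.cong) (use q0 in auto)
  also have "(\<Sum>k=0..l. q k * t ^ (l - k)) = (\<Sum>j=0..l. q (l - j) * t ^ j)"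
    using sum.atLeastAtMost_rev[of "\<lambda>k. q k * t ^ (l - k)" 0 l]
    by (auto intro!: sum.cong)
  finally show ?thesis by (simp add: sum_divide_distrib)
qed

lemma sum_split_const:
  fixes c :: "nat \<Rightarrow> 'a::field"
  shows "(\<Sum>j=0..l. c j * y ^ j) = c 0 + y * (\<Sum>j=1..l. c j * y ^ (j - 1))"
proof -
  have "(\<Sum>j=0..l. c j * y ^ j) = c 0 + (\<Sum>j=1..l. c j * y ^ j)"
    by (simp add: sum.atLeast_Suc_atMost)
  also have "(\<Sum>j=1..l. c j * y ^ j) = y * (\<Sum>j=1..l. c j * y ^ (j - 1))"
    unfolding sum_distrib_left
    by (rule sum.cong[OF refl]) (auto simp: power_eq_if)
  finally show ?thesis .
qed



lemma Pbar_coef_mem: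
  fixes l :: nat and q :: "nat \<Rightarrow> 'a::field"
  assumes q0: "q 0 = 1" and qm: "\<forall>j\<le>l. q j \<in> ring_gen S" and qi: "inverse (q l) \<in> ring_gen S"
  shows "\<forall>j\<le>l. q (l - j) / q l \<in> ring_gen S"
proof (intro allI impI)
  fix j assume "j \<le> l"
  have "q (l - j) \<in> ring_gen S" using qm diff_le_self by blast
  then show "q (l - j) / q l \<in> ring_gen S"
    unfolding divide_inverse using qi by (rule ring_gen.mult)
qed

lemma G_Pexch:
  fixes l :: nat and q :: "nat \<Rightarrow> 'a::field"
  assumes q0: "q 0 = 1" and qm: "\<forall>j\<le>l. q j \<in> ring_gen S" and y: "y \<in> ring_gen S"
  shows "\<exists>T\<in>ring_gen S. Pexch l q y = 1 + y * T"
proof -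
  have "Pexch l q y = 1 + y * (\<Sum>j=1..l. q j * y ^ (j - 1))"
    unfolding Pexch_sum[of q, OF q0] sum_split_const q0 ..
  moreover have "(\<Sum>j=1..l. q j * y ^ (j - 1)) \<in> ring_gen S"
    using qm y by (auto intro!: rg_sum ring_gen.mult rg_pow)
  ultimately show ?thesis by blast
qed

lemma G_Pbar:
  fixes l :: nat and q :: "nat \<Rightarrow> 'a::field"
  assumes q0: "q 0 = 1" and ql: "q l \<noteq> 0" and qm: "\<forall>j\<le>l. q j \<in> ring_gen S"
    and qi: "inverse (q l) \<in> ring_gen S" and y: "y \<in> ring_gen S"
  shows "\<exists>T\<in>ring_gen S. Pbar l q y = 1 + y * T"
proof -
  have "Pbar l q y = 1 + y * (\<Sum>j=1..l. (q (l - j) / q l) * y ^ (j - 1))"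
    unfolding Pbar_sum[of q, OF q0] sum_split_const using ql by simp
  moreover have "(\<Sum>j=1..l. (q (l - j) / q l) * y ^ (j - 1)) \<in> ring_gen S"
  proof (rule rg_sum[OF finite_atLeastAtMost], rule ballI)
    fix j assume "j \<in> {1..l}"
    then have "q (l - j) / q l \<in> ring_gen S" using Pbar_coef_mem[OF q0 qm qi] by simp
    then show "q (l - j) / q l * y ^ (j - 1) \<in> ring_gen S"
      using y by (intro ring_gen.mult rg_pow)
  qed
  ultimately show ?thesis by blast
qed

lemma step_PexPbar:
  fixes l :: nat and q :: "nat \<Rightarrow> 'a::field"
  assumes q0: "q 0 = 1" and ql: "q l \<noteq> 0" and qm: "\<forall>j\<le>l. q j \<in> ring_gen S"
    and qi: "inverse (q l) \<in> ring_gen S"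
    and y: "y \<noteq> 0" and ra: "y * a = Pexch l q b" and rz: "b * z = 1 + y * T"
    and rw: "y * w = Pbar l q z"
    and m: "a \<in> ring_gen S" "b \<in> ring_gen S" "z \<in> ring_gen S" "T \<in> ring_gen S"
  shows "w \<in> ring_gen S"
proof (rule core_mem[OF y _ rz _ _ m(1,2,3) _ m(4)])
  show "y * a = (\<Sum>j=0..l. q j * b ^ j)" using ra Pexch_sum[of q, OF q0] by simp
  show "y * w = (\<Sum>j=0..l. (q (l - j) / q l) * z ^ j)" using rw Pbar_sum[of q, OF q0] by simp
  show "\<forall>j\<le>l. q (l - (l - j)) / q l = inverse (q l) * q j" by (simp add: divide_inverse mult_ac)
  show "inverse (q l) \<in> ring_gen S" by (rule qi)
  show "\<forall>j\<le>l. q (l - j) / q l \<in> ring_gen S" by (rule Pbar_coef_mem[OF q0 qm qi])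
qed

lemma step_PbarPex:
  fixes l :: nat and q :: "nat \<Rightarrow> 'a::field"
  assumes q0: "q 0 = 1" and ql: "q l \<noteq> 0" and qm: "\<forall>j\<le>l. q j \<in> ring_gen S"
    and qi: "inverse (q l) \<in> ring_gen S"
    and y: "y \<noteq> 0" and ra: "y * a = Pbar l q b" and rz: "b * z = 1 + y * T"
    and rw: "y * w = Pexch l q z"
    and m: "a \<in> ring_gen S" "b \<in> ring_gen S" "z \<in> ring_gen S" "T \<in> ring_gen S"
  shows "w \<in> ring_gen S"
proof (rule core_mem[OF y _ rz _ _ m(1,2,3) _ m(4)])
  show "y * a = (\<Sum>j=0..l. (q (l - j) / q l) * b ^ j)" using ra Pbar_sum[of q, OF q0] by simp
  show "y * w = (\<Sum>j=0..l. q j * z ^ j)" using rw Pexch_sum[of q, OF q0] by simp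
  show "\<forall>j\<le>l. q (l - j) = q l * (q (l - j) / q l)" using ql by simp
  show "q l \<in> ring_gen S" using qm by simp
  show "\<forall>j\<le>l. q j \<in> ring_gen S" by (rule qm)
qed

context
  fixes l1 l2 :: nat and p :: "nat \<Rightarrow> nat \<Rightarrow> 'a::field_char_0" and x1 x2 :: 'a
  assumes l1: "l1 \<ge> 1" and l2: "l2 \<ge> 1" and p10: "p 1 0 = 1" and p20: "p 2 0 = 1"
    and ind: "alg_indep_on (var_val p x1 x2) (gen_vars l1 l2)"
begin

lemma Pos_ev_nz: "Pos (gen_vars l1 l2) q \<Longrightarrow> mpoly_eval q (var_val p x1 x2) \<noteq> 0"
  using ind Pos_nz[of "gen_vars l1 l2" q] unfolding alg_indep_on_def Pos_def vars_in_def by blast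

definition QQ :: "'a set" where
  "QQ = {t. \<exists>N D. Pos (gen_vars l1 l2) N \<and> Pos (gen_vars l1 l2) D \<and>
          t = mpoly_eval N (var_val p x1 x2) / mpoly_eval D (var_val p x1 x2)}"

lemma Q_nz: "t \<in> QQ \<Longrightarrow> t \<noteq> 0"
  unfolding QQ_def using Pos_ev_nz by auto

lemma Q_add: assumes "s \<in> QQ" "t \<in> QQ" shows "s + t \<in> QQ"
proof -
  obtain N1 D1 N2 D2 where h: "Pos (gen_vars l1 l2) N1" "Pos (gen_vars l1 l2) D1"
     "Pos (gen_vars l1 l2) N2" "Pos (gen_vars l1 l2) D2"
     "s = mpoly_eval N1 (var_val p x1 x2) / mpoly_eval D1 (var_val p x1 x2)"
     "t = mpoly_eval N2 (var_val p x1 x2) / mpoly_eval D2 (var_val p x1 x2)"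
    using assms unfolding QQ_def by blast
  have nz: "mpoly_eval D1 (var_val p x1 x2) \<noteq> 0" "mpoly_eval D2 (var_val p x1 x2) \<noteq> 0"
    using h Pos_ev_nz by auto
  have e: "s + t = mpoly_eval (N1 * D2 + N2 * D1) (var_val p x1 x2) / mpoly_eval (D1 * D2) (var_val p x1 x2)"
    unfolding h(5,6) using nz by (simp add: eval_add eval_mult field_simps)
  show ?thesis unfolding QQ_def
    apply (rule CollectI, rule exI[of _ "N1 * D2 + N2 * D1"], rule exI[of _ "D1 * D2"])
    using h e by (simp add: Pos_add Pos_mult)
qed

lemma Q_mult: assumes "s \<in> QQ" "t \<in> QQ" shows "s * t \<in> QQ"
proof -
  obtain N1 D1 N2 D2 where h: "Pos (gen_vars l1 l2) N1" "Pos (gen_vars l1 l2) D1"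
     "Pos (gen_vars l1 l2) N2" "Pos (gen_vars l1 l2) D2"
     "s = mpoly_eval N1 (var_val p x1 x2) / mpoly_eval D1 (var_val p x1 x2)"
     "t = mpoly_eval N2 (var_val p x1 x2) / mpoly_eval D2 (var_val p x1 x2)"
    using assms unfolding QQ_def by blast
  show ?thesis unfolding QQ_def
    apply (rule CollectI, rule exI[of _ "N1 * N2"], rule exI[of _ "D1 * D2"])
    using h by (simp add: Pos_mult eval_mult)
qed

lemma Q_div: assumes "s \<in> QQ" "t \<in> QQ" shows "s / t \<in> QQ"
proof -
  obtain N1 D1 N2 D2 where h: "Pos (gen_vars l1 l2) N1" "Pos (gen_vars l1 l2) D1"
     "Pos (gen_vars l1 l2) N2" "Pos (gen_vars l1 l2) D2"
     "s = mpoly_eval N1 (var_val p x1 x2) / mpoly_eval D1 (var_val p x1 x2)"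
     "t = mpoly_eval N2 (var_val p x1 x2) / mpoly_eval D2 (var_val p x1 x2)"
    using assms unfolding QQ_def by blast
  show ?thesis unfolding QQ_def
    apply (rule CollectI, rule exI[of _ "N1 * D2"], rule exI[of _ "D1 * N2"])
    using h by (simp add: Pos_mult eval_mult)
qed

lemma Q_one: "1 \<in> QQ"
  unfolding QQ_def
  by (rule CollectI, rule exI[of _ 1], rule exI[of _ 1]) (simp add: Pos_one Pos_ev_nz)

lemma Q_var: "v \<in> gen_vars l1 l2 \<Longrightarrow> var_val p x1 x2 v \<in> QQ"
  unfolding QQ_def
  by (rule CollectI, rule exI[of _ "Var v"], rule exI[of _ 1]) (simp add: Pos_one Pos_Var eval_Var eval_one)

lemma Q_p: "(i,k) \<in> par_idx l1 l2 \<Longrightarrow> p i k \<in> QQ"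
  using Q_var[of "PV i k"] by (auto simp: gen_vars_def var_val_def)

lemma Q_x1: "x1 \<in> QQ" using Q_var[of "XV 1"] by (auto simp: gen_vars_def var_val_def)
lemma Q_x2: "x2 \<in> QQ" using Q_var[of "XV 2"] by (auto simp: gen_vars_def var_val_def)

lemma Q_pow: "t \<in> QQ \<Longrightarrow> t ^ n \<in> QQ"
  by (induct n) (auto simp: Q_one Q_mult)

lemma Q_sum: "finite I \<Longrightarrow> I \<noteq> {} \<Longrightarrow> (\<forall>i\<in>I. f i \<in> QQ) \<Longrightarrow> sum f I \<in> QQ"
  by (induct I rule: finite_ne_induct) (auto simp: Q_add)

lemma Q_Pexch: assumes "l \<ge> 1" "\<forall>k\<in>{1..l}. q k \<in> QQ" "t \<in> QQ" shows "Pexch l q t \<in> QQ"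
  unfolding Pexch_def using assms
  by (intro Q_add Q_one Q_sum) (auto intro!: Q_mult Q_pow)

lemma Q_Pbar: assumes "l \<ge> 1" "\<forall>k\<in>{1..l}. q k \<in> QQ" "t \<in> QQ" shows "Pbar l q t \<in> QQ"
  unfolding Pbar_def using assms
  by (intro Q_div Q_sum) (auto intro!: Q_mult Q_pow Q_one)

lemma Q_exch: "t \<in> QQ \<Longrightarrow> exch l1 l2 p k t \<in> QQ"
proof -
  assume t: "t \<in> QQ"
  have a: "\<forall>k\<in>{1..l1}. p 1 k \<in> QQ" "\<forall>k\<in>{1..l2}. p 2 k \<in> QQ"
    by (auto intro!: Q_p simp: par_idx_def)
  show ?thesis unfolding exch_def using Q_Pexch[OF l1 a(1) t] Q_Pexch[OF l2 a(2) t]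
      Q_Pbar[OF l1 a(1) t] Q_Pbar[OF l2 a(2) t] by auto
qed

lemma Q_fwd: "fst (fwd l1 l2 p x1 x2 n) \<in> QQ \<and> snd (fwd l1 l2 p x1 x2 n) \<in> QQ"
proof (induct n)
  case 0 then show ?case by (simp add: Q_x1 Q_x2)
next
  case (Suc n)
  obtain u w where uw: "fwd l1 l2 p x1 x2 n = (u, w)" by (cases "fwd l1 l2 p x1 x2 n")
  with Suc show ?case by (simp add: Q_div Q_exch)
qed

lemma Q_bwd: "fst (bwd l1 l2 p x1 x2 n) \<in> QQ \<and> snd (bwd l1 l2 p x1 x2 n) \<in> QQ"
proof (induct n)
  case 0 then show ?case by (simp add: Q_x1 Q_x2)
next
  case (Suc n)
  obtain u w where uw: "bwd l1 l2 p x1 x2 n = (u, w)" by (cases "bwd l1 l2 p x1 x2 n")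
  with Suc show ?case by (simp add: Q_div Q_exch)
qed

lemma x_nz: "xseq l1 l2 p x1 x2 k \<noteq> 0"
  unfolding xseq_def using Q_fwd Q_bwd Q_nz by auto

lemma p_nz: "(i,k) \<in> par_idx l1 l2 \<Longrightarrow> p i k \<noteq> 0"
  using Q_p Q_nz by blast


lemma x_fwd1: "xseq l1 l2 p x1 x2 (int n + 1) = fst (fwd l1 l2 p x1 x2 n)"
  by (simp add: xseq_def)

lemma x_fwd2: "xseq l1 l2 p x1 x2 (int n + 2) = snd (fwd l1 l2 p x1 x2 n)"
proof -
  have "xseq l1 l2 p x1 x2 (int n + 2) = fst (fwd l1 l2 p x1 x2 (Suc n))"
    by (simp add: xseq_def nat_add_distrib)
  then show ?thesis by (simp add: case_prod_beta Let_def)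
qed

lemma x_bwd1: "xseq l1 l2 p x1 x2 (1 - int n) = snd (bwd l1 l2 p x1 x2 n)"
proof (cases n)
  case 0 then show ?thesis by (simp add: xseq_def)
next
  case (Suc m)
  have "nat (1 - (1 - int n)) = n" by simp
  then show ?thesis using Suc by (simp add: xseq_def)
qed

lemma x_bwd2: "xseq l1 l2 p x1 x2 (2 - int n) = fst (bwd l1 l2 p x1 x2 n)"
proof (cases n)
  case 0 then show ?thesis by (simp add: xseq_def)
next
  case (Suc m)
  then have "xseq l1 l2 p x1 x2 (2 - int n) = xseq l1 l2 p x1 x2 (1 - int m)" by (simp add: algebra_simps)
  also have "\<dots> = snd (bwd l1 l2 p x1 x2 m)" by (rule x_bwd1)
  also have "\<dots> = fst (bwd l1 l2 p x1 x2 n)" using Suc by (simp add: case_prod_beta Let_def)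
  finally show ?thesis .
qed

lemma x_rec: "xseq l1 l2 p x1 x2 (j + 1) * xseq l1 l2 p x1 x2 (j - 1) = exch l1 l2 p j (xseq l1 l2 p x1 x2 j)"
proof (cases "j \<ge> 2")
  case True
  then obtain n where n: "j = int n + 2" by (intro that[of "nat (j - 2)"]) simp
  have "xseq l1 l2 p x1 x2 (j + 1) = xseq l1 l2 p x1 x2 (int (Suc n) + 2)" using n by simp
  also have "\<dots> = exch l1 l2 p j (xseq l1 l2 p x1 x2 j) / xseq l1 l2 p x1 x2 (j - 1)"
  proof -
    have e: "j - 1 = int n + 1" using n by simp
    show ?thesis unfolding x_fwd2 e x_fwd1 using n x_fwd2[of n] by (simp add: case_prod_beta Let_def)
  qed
  finally show ?thesis using x_nz[of "j - 1"] by simp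
next
  case False
  then obtain n where n: "j = 1 - int n" by (intro that[of "nat (1 - j)"]) simp
  have "xseq l1 l2 p x1 x2 (j - 1) = xseq l1 l2 p x1 x2 (1 - int (Suc n))" using n by simp
  also have "\<dots> = exch l1 l2 p j (xseq l1 l2 p x1 x2 j) / xseq l1 l2 p x1 x2 (j + 1)"
  proof -
    have e: "j + 1 = 2 - int n" using n by simp
    show ?thesis unfolding x_bwd1 e x_bwd2 using n x_bwd1[of n] by (simp add: case_prod_beta Let_def)
  qed
  finally show ?thesis using x_nz[of "j + 1"] by simp
qed


lemma par_idx_eq: "par_idx l1 l2 = {1} \<times> {1..l1} \<union> {2} \<times> {1..l2}"
  unfolding par_idx_def by auto

lemma fin_par: "finite (par_idx l1 l2)"
  unfolding par_idx_eq by simp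

lemma LM_mult:
  assumes "s \<in> laurent_monomials l1 l2 p" "t \<in> laurent_monomials l1 l2 p"
  shows "s * t \<in> laurent_monomials l1 l2 p"
proof -
  obtain e1 e2 where e: "s = (\<Prod>(i,k)\<in>par_idx l1 l2. p i k powi e1 (i,k))"
      "t = (\<Prod>(i,k)\<in>par_idx l1 l2. p i k powi e2 (i,k))"
    using assms unfolding laurent_monomials_def by blast
  have "s * t = (\<Prod>(i,k)\<in>par_idx l1 l2. p i k powi (e1 (i,k) + e2 (i,k)))"
    unfolding e prod.distrib[symmetric]
    by (rule prod.cong[OF refl]) (auto simp: power_int_add p_nz)
  then show ?thesis unfolding laurent_monomials_def
    by (intro CollectI exI[of _ "\<lambda>z. e1 z + e2 z"]) simp
qed

lemma LM_single:
  assumes "(i0,k0) \<in> par_idx l1 l2"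
  shows "p i0 k0 powi n \<in> laurent_monomials l1 l2 p"
proof -
  have "(\<Prod>(i,k)\<in>par_idx l1 l2. p i k powi (if (i,k) = (i0,k0) then n else 0))
      = (\<Prod>z\<in>par_idx l1 l2. if z = (i0,k0) then p i0 k0 powi n else 1)"
    by (rule prod.cong[OF refl]) (clarify, simp split: if_split)
  also have "\<dots> = p i0 k0 powi n" by (subst prod.delta[OF fin_par]) (simp add: assms)
  finally have calc: "(\<Prod>(i,k)\<in>par_idx l1 l2. p i k powi (if (i,k) = (i0,k0) then n else 0)) = p i0 k0 powi n" .
  show ?thesis unfolding laurent_monomials_def mem_Collect_eq
    by (rule exI[of _ "\<lambda>z. if z = (i0,k0) then n else 0"], rule conjI[OF calc[symmetric] TrueI])
qed

lemma LM_p: "(i,k) \<in> par_idx l1 l2 \<Longrightarrow> p i k \<in> laurent_monomials l1 l2 p"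
  using LM_single[of i k 1] by simp

lemma LM_pinv: "(i,k) \<in> par_idx l1 l2 \<Longrightarrow> inverse (p i k) \<in> laurent_monomials l1 l2 p"
  using LM_single[of i k "-1"] by (simp add: power_int_minus)

lemma qmem:
  assumes "laurent_monomials l1 l2 p \<subseteq> S" "i = 1 \<and> l = l1 \<or> i = 2 \<and> l = l2"
  shows "\<forall>j\<le>l. p i j \<in> ring_gen S" "inverse (p i l) \<in> ring_gen S" "p i l \<noteq> 0" "p i 0 = 1"
proof -
  have l: "l \<ge> 1" using assms(2) l1 l2 by auto
  have pi: "(i, j) \<in> par_idx l1 l2" if "1 \<le> j" "j \<le> l" for j
    using assms(2) that unfolding par_idx_def by auto
  show "p i 0 = 1" using assms(2) p10 p20 by auto
  show "\<forall>j\<le>l. p i j \<in> ring_gen S"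
  proof (intro allI impI)
    fix j assume j: "j \<le> l"
    show "p i j \<in> ring_gen S"
    proof (cases "j = 0")
      case True then show ?thesis using \<open>p i 0 = 1\<close> by (simp add: ring_gen.one)
    next
      case False then show ?thesis using j pi LM_p assms(1) by (auto intro!: ring_gen.base)
    qed
  qed
  show "inverse (p i l) \<in> ring_gen S" using pi[OF l order.refl] LM_pinv assms(1) by (auto intro!: ring_gen.base)
  show "p i l \<noteq> 0" using pi[OF l order.refl] p_nz by blast
qed

lemma exch_G:
  assumes "laurent_monomials l1 l2 p \<subseteq> S" "y \<in> ring_gen S"
  shows "\<exists>T\<in>ring_gen S. exch l1 l2 p m y = 1 + y * T"
proof -
  have c1: "i = 1 \<and> l1 = l1 \<or> i = 1 \<and> l1 = l2" if "i = 1" for i using that by simp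
  note A1 = qmem[OF assms(1), of 1 l1, simplified]
  note A2 = qmem[OF assms(1), of 2 l2, simplified]
  show ?thesis unfolding exch_def
    using G_Pexch[OF A1(4) A1(1) assms(2)] G_Pexch[OF A2(4) A2(1) assms(2)]
      G_Pbar[OF A1(4) A1(3) A1(1) A1(2) assms(2)] G_Pbar[OF A2(4) A2(3) A2(1) A2(2) assms(2)]
    by auto
qed

lemma step_ctx:
  assumes LM: "laurent_monomials l1 l2 p \<subseteq> S"
    and y: "y \<noteq> 0" and ra: "y * a = exch l1 l2 p k b" and rz: "b * z = exch l1 l2 p m y"
    and rw: "y * w = exch l1 l2 p k' z" and kk: "k' mod 4 = (k + 2) mod 4"
    and mem: "a \<in> ring_gen S" "b \<in> ring_gen S" "y \<in> ring_gen S" "z \<in> ring_gen S"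
  shows "w \<in> ring_gen S"
proof -
  obtain T where T: "T \<in> ring_gen S" "b * z = 1 + y * T" using exch_G[OF LM mem(3), of m] rz by auto
  note A1 = qmem[OF LM, of 1 l1, simplified]
  note A2 = qmem[OF LM, of 2 l2, simplified]
  have "k mod 4 = 0 \<or> k mod 4 = 1 \<or> k mod 4 = 2 \<or> k mod 4 = 3" by arith
  then show ?thesis
  proof (elim disjE)
    assume k: "k mod 4 = 0"
    then have k': "k' mod 4 = 2" using kk by presburger
    show ?thesis
      using step_PbarPex[OF A2(4) A2(3) A2(1) A2(2) y _ T(2) _ mem(1,2,4) T(1)] ra rw k k'
      by (simp add: exch_def)
  next
    assume k: "k mod 4 = 1"
    then have k': "k' mod 4 = 3" using kk by presburger
    show ?thesis
      using step_PexPbar[OF A1(4) A1(3) A1(1) A1(2) y _ T(2) _ mem(1,2,4) T(1)] ra rw k k'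
      by (simp add: exch_def)
  next
    assume k: "k mod 4 = 2"
    then have k': "k' mod 4 = 0" using kk by presburger
    show ?thesis
      using step_PexPbar[OF A2(4) A2(3) A2(1) A2(2) y _ T(2) _ mem(1,2,4) T(1)] ra rw k k'
      by (simp add: exch_def)
  next
    assume k: "k mod 4 = 3"
    then have k': "k' mod 4 = 1" using kk by presburger
    show ?thesis
      using step_PbarPex[OF A1(4) A1(3) A1(1) A1(2) y _ T(2) _ mem(1,2,4) T(1)] ra rw k k'
      by (simp add: exch_def)
  qed
qed


lemma x_rec0: "xseq l1 l2 p x1 x2 (k - 1) * xseq l1 l2 p x1 x2 (k + 1) = exch l1 l2 p k (xseq l1 l2 p x1 x2 k)"
  using x_rec[of k] by (simp add: mult.commute)

lemma x_rec1: "xseq l1 l2 p x1 x2 k * xseq l1 l2 p x1 x2 (k + 2) = exch l1 l2 p (k + 1) (xseq l1 l2 p x1 x2 (k + 1))"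
proof -
  have e: "k + 1 + 1 = k + 2" "k + 1 - 1 = k" by simp_all
  show ?thesis using x_rec[of "k + 1"] unfolding e by (simp add: mult.commute)
qed

lemma x_rec1': "xseq l1 l2 p x1 x2 (k + 2) * xseq l1 l2 p x1 x2 k = exch l1 l2 p (k + 1) (xseq l1 l2 p x1 x2 (k + 1))"
  using x_rec1[of k] by (simp add: mult.commute)

lemma x_rec2: "xseq l1 l2 p x1 x2 (k + 1) * xseq l1 l2 p x1 x2 (k + 3) = exch l1 l2 p (k + 2) (xseq l1 l2 p x1 x2 (k + 2))"
proof -
  have e: "k + 2 + 1 = k + 3" "k + 2 - 1 = k + 1" by simp_all
  show ?thesis using x_rec[of "k + 2"] unfolding e by (simp add: mult.commute)
qed

lemma x_up: "xseq l1 l2 p x1 x2 (k + 3) \<in> ZP_alg l1 l2 p {xseq l1 l2 p x1 x2 (k - 1), xseq l1 l2 p x1 x2 k,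
                           xseq l1 l2 p x1 x2 (k + 1), xseq l1 l2 p x1 x2 (k + 2)}"
  unfolding ZP_alg_def
  by (rule step_ctx[where k = k and m = "k + 1" and k' = "k + 2" and a = "xseq l1 l2 p x1 x2 (k - 1)"
        and b = "xseq l1 l2 p x1 x2 k" and y = "xseq l1 l2 p x1 x2 (k + 1)" and z = "xseq l1 l2 p x1 x2 (k + 2)"])
     (auto simp: x_nz x_rec x_rec1 x_rec2 intro: ring_gen.base)

lemma x_down: "xseq l1 l2 p x1 x2 (k - 1) \<in> ZP_alg l1 l2 p {xseq l1 l2 p x1 x2 k,
                           xseq l1 l2 p x1 x2 (k + 1), xseq l1 l2 p x1 x2 (k + 2), xseq l1 l2 p x1 x2 (k + 3)}"
  unfolding ZP_alg_def
  by (rule step_ctx[where k = "k + 2" and m = "k + 1" and k' = k and a = "xseq l1 l2 p x1 x2 (k + 3)"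
        and b = "xseq l1 l2 p x1 x2 (k + 2)" and y = "xseq l1 l2 p x1 x2 (k + 1)" and z = "xseq l1 l2 p x1 x2 k"])
     (auto simp: x_nz x_rec x_rec0 x_rec1 x_rec2 x_rec1' intro: ring_gen.base)

lemma L_step: "ZP_alg l1 l2 p {xseq l1 l2 p x1 x2 (k - 1), xseq l1 l2 p x1 x2 k,
                           xseq l1 l2 p x1 x2 (k + 1), xseq l1 l2 p x1 x2 (k + 2)} =
   ZP_alg l1 l2 p {xseq l1 l2 p x1 x2 k,
                           xseq l1 l2 p x1 x2 (k + 1), xseq l1 l2 p x1 x2 (k + 2), xseq l1 l2 p x1 x2 (k + 3)}"
proof
  show "ZP_alg l1 l2 p {xseq l1 l2 p x1 x2 (k - 1), xseq l1 l2 p x1 x2 k,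
                           xseq l1 l2 p x1 x2 (k + 1), xseq l1 l2 p x1 x2 (k + 2)} \<subseteq>
   ZP_alg l1 l2 p {xseq l1 l2 p x1 x2 k,
                           xseq l1 l2 p x1 x2 (k + 1), xseq l1 l2 p x1 x2 (k + 2), xseq l1 l2 p x1 x2 (k + 3)}"
    unfolding ZP_alg_def using x_down[of k] unfolding ZP_alg_def
    by (intro rg_subset) (auto intro: ring_gen.base)
  show "ZP_alg l1 l2 p {xseq l1 l2 p x1 x2 k,
                           xseq l1 l2 p x1 x2 (k + 1), xseq l1 l2 p x1 x2 (k + 2), xseq l1 l2 p x1 x2 (k + 3)} \<subseteq>
     ZP_alg l1 l2 p {xseq l1 l2 p x1 x2 (k - 1), xseq l1 l2 p x1 x2 k,
                           xseq l1 l2 p x1 x2 (k + 1), xseq l1 l2 p x1 x2 (k + 2)}"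
    unfolding ZP_alg_def using x_up[of k] unfolding ZP_alg_def
    by (intro rg_subset) (auto intro: ring_gen.base)
qed

lemma main_ctx:
  "\<forall>k::int. ZP_alg l1 l2 p (range (xseq l1 l2 p x1 x2)) =
           ZP_alg l1 l2 p {xseq l1 l2 p x1 x2 (k - 1), xseq l1 l2 p x1 x2 k,
                           xseq l1 l2 p x1 x2 (k + 1), xseq l1 l2 p x1 x2 (k + 2)}"
proof
  fix k :: int
  define L where "L k = ZP_alg l1 l2 p {xseq l1 l2 p x1 x2 (k - 1), xseq l1 l2 p x1 x2 k,
                           xseq l1 l2 p x1 x2 (k + 1), xseq l1 l2 p x1 x2 (k + 2)}" for k
  have st: "L (i + 1) = L i" for i
  proof -
    have e: "i + 1 - 1 = i" "i + 1 + 1 = i + 2" "i + 1 + 2 = i + 3" by simp_all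
    show ?thesis unfolding L_def e using L_step[of i] by simp
  qed
  have all: "L j = L 0" for j
  proof (induct j rule: int_induct[where k = 0])
    case base then show ?case ..
  next
    case (step1 i) then show ?case using st[of i] by simp
  next
    case (step2 i) then show ?case using st[of "i - 1"] by simp
  qed
  have rng: "range (xseq l1 l2 p x1 x2) \<subseteq> L 0"
  proof
    fix t assume "t \<in> range (xseq l1 l2 p x1 x2)"
    then obtain j where t: "t = xseq l1 l2 p x1 x2 j" by blast
    have "t \<in> L j" unfolding L_def ZP_alg_def t by (auto intro: ring_gen.base)
    then show "t \<in> L 0" using all[of j] by simp
  qed
  have "ZP_alg l1 l2 p (range (xseq l1 l2 p x1 x2)) \<subseteq> L 0"
    using rng unfolding ZP_alg_def L_def
    by (intro rg_subset) (auto intro: ring_gen.base)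
  moreover have "L 0 \<subseteq> ZP_alg l1 l2 p (range (xseq l1 l2 p x1 x2))"
    unfolding L_def ZP_alg_def by (intro rg_mono) auto
  ultimately have "ZP_alg l1 l2 p (range (xseq l1 l2 p x1 x2)) = L 0" by blast
  then show "ZP_alg l1 l2 p (range (xseq l1 l2 p x1 x2)) = L k" using all[of k] by simp
qed

end

theorem theoremA2:
  fixes l1 l2 :: nat and p :: "nat \<Rightarrow> nat \<Rightarrow> 'a::field_char_0" and x1 x2 :: 'a
  assumes "l1 \<ge> 1" and "l2 \<ge> 1"
    and "p 1 0 = 1" and "p 2 0 = 1"
    and "alg_indep_on (var_val p x1 x2) (gen_vars l1 l2)"
  shows "\<forall>k::int. ZP_alg l1 l2 p (range (xseq l1 l2 p x1 x2)) =
           ZP_alg l1 l2 p {xseq l1 l2 p x1 x2 (k - 1), xseq l1 l2 p x1 x2 k,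
                           xseq l1 l2 p x1 x2 (k + 1), xseq l1 l2 p x1 x2 (k + 2)}"
  by (rule main_ctx[OF assms])

end
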